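(* Let $F \in \mathbb{C}^{n \times n}$ be a unitary matrix with $|F_{ij}|^2 \leq \frac{c}{n}$ for all $i,j$ (for some constant $c>0$), and let $S \subseteq \{1,\dots,n\}$ be an index set with $|S| = t$. Then for any $k$-sparse vector $z \in \mathbb{C}^{n}$, $$\|(F^{*})_S F z\|^2_2 \leq \frac{ktc}{n}\|z\|_2^2 .$$
   Context: For a matrix $B \in \mathbb{C}^{m\times N}$ and $S \subseteq \{1,\dots,N\}$, $(B)_S$ denotes the $m \times N$ matrix obtained from $B$ by replacing the columns indexed by $\{1,\dots,N\}\setminus S$ with zero columns. $F^*$ is the conjugate transpose of $F$. A vector is $k$-sparse if it has at most $k$ nonzero entries. *)

theory Defs
  imports "HOL-Analysis.Analysis"
begin

definition conj_transpose :: "complex^'n^'m \<Rightarrow> complex^'m^'n" where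
  "conj_transpose A = (\<chi> i j. cnj (A $ j $ i))"

definition unitary_mat :: "complex^'n^'n \<Rightarrow> bool" where
  "unitary_mat U \<longleftrightarrow> conj_transpose U ** U = mat 1 \<and> U ** conj_transpose U = mat 1"

definition restrict_cols :: "complex^'n^'m \<Rightarrow> 'n set \<Rightarrow> complex^'n^'m" where
  "restrict_cols B S = (\<chi> i j. if j \<in> S then B $ i $ j else 0)"

definition sparse :: "nat \<Rightarrow> complex^'n \<Rightarrow> bool" where
  "sparse k z \<longleftrightarrow> card {i. z $ i \<noteq> 0} \<le> k"

end

theory Submission
  imports Defs
begin

lemma L2_sq: "(L2_set f A)\<^sup>2 = (\<Sum>i\<in>A. (f i)\<^sup>2)"
  unfolding L2_set_def by (simp add: sum_nonneg)

lemma normsq_vec: "(norm (x::complex^'n))\<^sup>2 = (\<Sum>i\<in>UNIV. (cmod (x$i))\<^sup>2)"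
  unfolding norm_vec_def by (simp add: L2_sq)

lemma normsq_vec_c: "complex_of_real ((norm (x::complex^'n))\<^sup>2) = (\<Sum>i\<in>UNIV. x$i * cnj (x$i))"
  unfolding normsq_vec of_real_sum complex_norm_square ..

lemma cs_sum:
  fixes a b :: "'a \<Rightarrow> complex"
  assumes "finite A"
  shows "(cmod (\<Sum>l\<in>A. a l * b l))\<^sup>2 \<le> (\<Sum>l\<in>A. (cmod (a l))\<^sup>2) * (\<Sum>l\<in>A. (cmod (b l))\<^sup>2)"
proof -
  have "cmod (\<Sum>l\<in>A. a l * b l) \<le> (\<Sum>l\<in>A. \<bar>cmod (a l)\<bar> * \<bar>cmod (b l)\<bar>)"
    by (simp add: norm_mult sum_norm_le)
  also have "\<dots> \<le> L2_set (\<lambda>l. cmod (a l)) A * L2_set (\<lambda>l. cmod (b l)) A"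
    by (rule L2_set_mult_ineq)
  finally have "(cmod (\<Sum>l\<in>A. a l * b l))\<^sup>2 \<le> (L2_set (\<lambda>l. cmod (a l)) A * L2_set (\<lambda>l. cmod (b l)) A)\<^sup>2"
    by (simp add: power_mono)
  then show ?thesis by (simp add: power_mult_distrib L2_sq)
qed

lemma unitary_norm:
  fixes F :: "complex^'n^'n"
  assumes "F ** conj_transpose F = mat 1"
  shows "norm (conj_transpose F *v v) = norm v"
proof -
  let ?U = "conj_transpose F"
  have "complex_of_real ((norm (?U *v v))\<^sup>2)
      = (\<Sum>i\<in>UNIV. (\<Sum>j\<in>UNIV. ?U$i$j * v$j) * cnj (\<Sum>l\<in>UNIV. ?U$i$l * v$l))"
    unfolding normsq_vec_c by (simp add: matrix_vector_mult_def)
  also have "\<dots> = (\<Sum>i\<in>UNIV. \<Sum>j\<in>UNIV. \<Sum>l\<in>UNIV. ?U$i$j * v$j * (cnj (?U$i$l) * cnj (v$l)))"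
    apply (simp add: sum_distrib_left sum_distrib_right)
    apply (rule sum.cong, simp, rule sum.swap)
    done
  also have "\<dots> = (\<Sum>j\<in>UNIV. \<Sum>l\<in>UNIV. v$j * cnj (v$l) * (\<Sum>i\<in>UNIV. F$l$i * cnj (F$j$i)))"
    apply (rule trans[OF sum.swap])
    apply (rule sum.cong[OF refl])
    apply (rule trans[OF sum.swap])
    apply (rule sum.cong[OF refl])
    apply (simp add: sum_distrib_left conj_transpose_def)
    apply (rule sum.cong[OF refl])
    apply (simp add: algebra_simps)
    done
  also have "\<dots> = (\<Sum>j\<in>UNIV. \<Sum>l\<in>UNIV. v$j * cnj (v$l) * (mat 1 :: complex^'n^'n)$l$j)"
    using assms[symmetric] by (simp add: matrix_matrix_mult_def conj_transpose_def)
  also have "\<dots> = (\<Sum>j\<in>UNIV. v$j * cnj (v$j))"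
    by (simp add: mat_def if_distrib cong: if_cong)
  also have "\<dots> = complex_of_real ((norm v)\<^sup>2)"
    by (rule normsq_vec_c[symmetric])
  finally have "(norm (?U *v v))\<^sup>2 = (norm v)\<^sup>2" using of_real_eq_iff by blast
  then show ?thesis by (simp add: power2_eq_iff_nonneg)
qed

theorem lemma1:
  fixes F :: "complex^'n^'n" and c :: real and S :: "'n set" and t k :: nat
    and z :: "complex^'n"
  assumes "unitary_mat F"
    and "c > 0"
    and "\<And>i j. (cmod (F $ i $ j))\<^sup>2 \<le> c / real CARD('n)"
    and "card S = t"
    and "sparse k z"
  shows "(norm (restrict_cols (conj_transpose F) S *v (F *v z)))\<^sup>2
           \<le> real k * real t * c / real CARD('n) * (norm z)\<^sup>2"
proof -
  define w where "w = F *v z"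
  define v where "v = (\<chi> j. if j \<in> S then w$j else 0)"
  define A where "A = {i. z $ i \<noteq> 0}"
  have cA: "card A \<le> k" using assms(5) by (simp add: sparse_def A_def)
  have eq1: "restrict_cols (conj_transpose F) S *v w = conj_transpose F *v v"
    by (auto simp: vec_eq_iff matrix_vector_mult_def restrict_cols_def v_def intro!: sum.cong)
  have n1: "norm (conj_transpose F *v v) = norm v"
    using assms(1) unitary_mat_def unitary_norm by blast
  have nv: "(norm v)\<^sup>2 = (\<Sum>j\<in>S. (cmod (w$j))\<^sup>2)"
  proof -
    have "(cmod (v$i))\<^sup>2 = (if i\<in>S then (cmod (w$i))\<^sup>2 else 0)" for i by (simp add: v_def)
    then show ?thesis unfolding normsq_vec by (simp add: sum.If_cases)
  qed
  have wj: "(cmod (w$j))\<^sup>2 \<le> real k * c / real CARD('n) * (norm z)\<^sup>2" for j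
  proof -
    have "w$j = (\<Sum>l\<in>UNIV. F$j$l * z$l)" by (simp add: w_def matrix_vector_mult_def)
    also have "\<dots> = (\<Sum>l\<in>A. F$j$l * z$l)"
      by (rule sum.mono_neutral_right) (auto simp: A_def)
    finally have "(cmod (w$j))\<^sup>2 \<le> (\<Sum>l\<in>A. (cmod (F$j$l))\<^sup>2) * (\<Sum>l\<in>A. (cmod (z$l))\<^sup>2)"
      using cs_sum[of A] by simp
    also have "\<dots> \<le> (real k * (c / real CARD('n))) * (norm z)\<^sup>2"
    proof (rule mult_mono)
      have "(\<Sum>l\<in>A. (cmod (F$j$l))\<^sup>2) \<le> (\<Sum>l\<in>A. c / real CARD('n))"
        by (rule sum_mono) (rule assms(3))
      also have "\<dots> = real (card A) * (c / real CARD('n))" by simp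
      also have "\<dots> \<le> real k * (c / real CARD('n))"
        using cA assms(2) by (intro mult_right_mono) auto
      finally show "(\<Sum>l\<in>A. (cmod (F$j$l))\<^sup>2) \<le> real k * (c / real CARD('n))" .
      show "(\<Sum>l\<in>A. (cmod (z$l))\<^sup>2) \<le> (norm z)\<^sup>2"
        unfolding normsq_vec by (rule sum_mono2) auto
      show "0 \<le> real k * (c / real CARD('n))" using assms(2) by simp
      show "0 \<le> (\<Sum>l\<in>A. (cmod (z$l))\<^sup>2)" by (simp add: sum_nonneg)
    qed
    finally show ?thesis by simp
  qed
  have "(\<Sum>j\<in>S. (cmod (w$j))\<^sup>2) \<le> (\<Sum>j\<in>S. real k * c / real CARD('n) * (norm z)\<^sup>2)"
    by (rule sum_mono) (rule wj)
  also have "\<dots> = real k * real t * c / real CARD('n) * (norm z)\<^sup>2"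
    using assms(4) by simp
  finally show ?thesis
    using eq1 n1 nv by (simp add: w_def)
qed

end
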